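(* Let $q\in\mathbb{C}\setminus\{0\}$ be not a root of unity, let $\lambda,\mu$ be strict partitions with $|\lambda|=|\mu|=n$, let $\Lambda\in\mathcal S_\lambda$, $\Gamma\in\mathcal S_\mu$, and let $\nu_1,\nu_2\in\{-1,1\}^n$. If $\big((q_k^\Lambda)^{\nu_1(k)}\big)_{k=1}^n=\big((q_k^\Gamma)^{\nu_2(k)}\big)_{k=1}^n$, then $\Lambda=\Gamma$. In particular $P(\lambda)\cap P(\mu)=\emptyset$ if $\lambda\neq\mu$.
   Context: $[m]_{q^2}=(q^{2m}-q^{-2m})/(q^2-q^{-2})$; for each integer $m\ge0$ a square root $s_m$ of $[m+1]_{q^2}[m]_{q^2}$ is fixed once and for all and $x_m=[m+1]_{q^2}-[m]_{q^2}-(q-q^{-1})s_m$. For a strict partition $\lambda$ (distinct positive parts), the shifted diagram has boxes $(i,j)$ with $i\le j\le i+\lambda_i-1$; $\mathcal S_\lambda$ is the set of standard shifted tableaux (fillings by $1,\dots,|\lambda|$ increasing along rows and columns). For $\Lambda\in\mathcal S_\lambda$ and $k$, let $(i_k,j_k)$ be the box containing $k$ and $q_k^\Lambda=x_{j_k-i_k}$. $P(\lambda)$ denotes the set of weights of the Jones–Nazarov $G_n$-module $V_\lambda$ with respect to its commuting Jucys–Murphy elements; concretely $P(\lambda)=\{((q_k^\Lambda)^{\nu(k)})_{k=1}^n:\Lambda\in\mathcal S_\lambda,\ \nu\in\{\pm1\}^n\}$. *)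

theory Defs
  imports Complex_Main
begin

definition qint :: "complex \<Rightarrow> nat \<Rightarrow> complex" where
  "qint q m = (q ^ (2*m) - inverse q ^ (2*m)) / (q ^ 2 - inverse q ^ 2)"

definition sqrt_choice :: "complex \<Rightarrow> (nat \<Rightarrow> complex) \<Rightarrow> bool" where
  "sqrt_choice q s \<longleftrightarrow> (\<forall>m. (s m) ^ 2 = qint q (m+1) * qint q m)"

definition xval :: "complex \<Rightarrow> (nat \<Rightarrow> complex) \<Rightarrow> nat \<Rightarrow> complex" where
  "xval q s m = qint q (m+1) - qint q m - (q - inverse q) * s m"

definition strict_partition :: "nat list \<Rightarrow> bool" where
  "strict_partition la \<longleftrightarrow> sorted_wrt (>) la \<and> (\<forall>x\<in>set la. 0 < x)"

text \<open>Shifted diagram, rows and columns 1-indexed: (i,j) with i \<le> j \<le> i + la_i - 1.\<close>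
definition shifted_diagram :: "nat list \<Rightarrow> (nat \<times> nat) set" where
  "shifted_diagram la = {(i,j). 1 \<le> i \<and> i \<le> length la \<and> i \<le> j \<and> j + 1 \<le> i + la ! (i - 1)}"

definition std_shifted_tableaux :: "nat list \<Rightarrow> (nat \<times> nat \<Rightarrow> nat) set" where
  "std_shifted_tableaux la = {T.
     bij_betw T (shifted_diagram la) {1..sum_list la} \<and>
     (\<forall>b. b \<notin> shifted_diagram la \<longrightarrow> T b = 0) \<and>
     (\<forall>i j. (i,j) \<in> shifted_diagram la \<and> (i,j+1) \<in> shifted_diagram la \<longrightarrow> T (i,j) < T (i,j+1)) \<and>
     (\<forall>i j. (i,j) \<in> shifted_diagram la \<and> (i+1,j) \<in> shifted_diagram la \<longrightarrow> T (i,j) < T (i+1,j))}"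

text \<open>q_k^T = x_{j_k - i_k}, where (i_k,j_k) is the box of T containing k.\<close>
definition qk :: "complex \<Rightarrow> (nat \<Rightarrow> complex) \<Rightarrow> nat list \<Rightarrow> (nat \<times> nat \<Rightarrow> nat) \<Rightarrow> nat \<Rightarrow> complex" where
  "qk q s la T k = (case the_inv_into (shifted_diagram la) T k of (i,j) \<Rightarrow> xval q s (j - i))"

definition sign_vec :: "nat \<Rightarrow> (nat \<Rightarrow> int) \<Rightarrow> bool" where
  "sign_vec n nu \<longleftrightarrow> (\<forall>k\<in>{1..n}. nu k = 1 \<or> nu k = -1)"

definition weight :: "complex \<Rightarrow> (nat \<Rightarrow> complex) \<Rightarrow> nat list \<Rightarrow> (nat \<times> nat \<Rightarrow> nat) \<Rightarrow> (nat \<Rightarrow> int) \<Rightarrow> complex list" where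
  "weight q s la T nu = map (\<lambda>k. qk q s la T k powi nu k) [1..<sum_list la + 1]"

definition weights :: "complex \<Rightarrow> (nat \<Rightarrow> complex) \<Rightarrow> nat list \<Rightarrow> complex list set" where
  "weights q s la = {weight q s la T nu | T nu. T \<in> std_shifted_tableaux la \<and> sign_vec (sum_list la) nu}"

end

theory Submission
  imports Defs
begin


lemma powi_pm: "(e::int) = 1 \<or> e = -1 \<Longrightarrow> (z::complex) powi e = (if e = 1 then z else inverse z)"
  by (auto simp: power_int_minus)

lemma qpow_inj:
  fixes q :: complex
  assumes "q \<noteq> 0" "\<forall>m::nat. 0 < m \<longrightarrow> q ^ m \<noteq> 1" "q ^ a = q ^ b"
  shows "a = b"
proof (rule ccontr)
  assume ne: "a \<noteq> b"
  { fix a b :: nat assume "a < b" "q ^ a = q ^ b"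
    have "q ^ b = q ^ a * q ^ (b - a)" using \<open>a < b\<close> by (simp flip: power_add)
    then have "q ^ a * q ^ (b - a) = q ^ a * 1" using \<open>q ^ a = q ^ b\<close> by simp
    then have "q ^ (b - a) = 1" using assms(1) by simp
    then have False using assms(2) \<open>a < b\<close> by simp }
  then show False using ne assms(3) by (metis linorder_neqE_nat)
qed

lemma key_identity:
  fixes q P :: complex
  assumes "q \<noteq> 0" "P \<noteq> 0" "q^2 - inverse q ^ 2 \<noteq> 0"
  shows "((P*q^2 - inverse (P*q^2) - (P - inverse P)) / (q^2 - inverse q^2))^2
     - (q - inverse q)^2 * ((P*q^2 - inverse (P*q^2)) / (q^2 - inverse q^2)) * ((P - inverse P) / (q^2 - inverse q^2)) = 1"
proof -
  define r where "r = inverse q"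
  define R where "R = inverse P"
  have qr: "q*r = 1" using assms(1) by (simp add: r_def)
  have PR: "P*R = 1" using assms(2) by (simp add: R_def)
  have iPq: "inverse (P*q^2) = R*r^2" by (simp add: R_def r_def power_inverse)
  have D: "q^2 - r^2 \<noteq> 0" using assms(3) by (simp add: r_def power_inverse)
  have E: "(P*q^2 - R*r^2 - (P - R))^2 - (q - r)^2 * (P*q^2 - R*r^2) * (P - R) = (q^2 - r^2)^2"
    using qr PR by algebra
  have G: "\<And>A B C F Dn :: complex. Dn \<noteq> 0 \<Longrightarrow> A^2 - B*C*F = Dn^2 \<Longrightarrow> (A/Dn)^2 - B*(C/Dn)*(F/Dn) = 1"
    by (simp add: field_simps power2_eq_square)
  have "inverse q = r" "inverse P = R" by (simp_all add: r_def R_def)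
  then show ?thesis unfolding iPq using G[OF D E] by simp
qed

definition aval :: "complex \<Rightarrow> nat \<Rightarrow> complex" where
  "aval q m = qint q (m+1) - qint q m"

lemma qint_P:
  fixes q :: complex
  shows "qint q (m+1) = ((q^(2*m))*q^2 - inverse ((q^(2*m))*q^2)) / (q^2 - inverse q^2)"
    and "qint q m = (q^(2*m) - inverse (q^(2*m))) / (q^2 - inverse q^2)"
proof -
  have h1: "q^(2*(m+1)) = q^(2*m)*q^2" by (subst distrib_left) (simp only: mult_1_right power_add)
  have h2: "inverse q ^ n = inverse (q ^ n)" for n by (simp add: power_inverse)
  show "qint q (m+1) = ((q^(2*m))*q^2 - inverse ((q^(2*m))*q^2)) / (q^2 - inverse q^2)"
    unfolding qint_def h2 h1 by (rule refl)
  show "qint q m = (q^(2*m) - inverse (q^(2*m))) / (q^2 - inverse q^2)"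
    unfolding qint_def h2 by (rule refl)
qed

lemma aval_P: "aval q m = ((q^(2*m))*q^2 - inverse ((q^(2*m))*q^2) - (q^(2*m) - inverse (q^(2*m)))) / (q^2 - inverse q^2)"
  unfolding aval_def by (subst qint_P(1), subst qint_P(2), simp only: diff_divide_distrib)

lemma q4: assumes "q \<noteq> 0" "\<forall>m::nat. 0 < m \<longrightarrow> q ^ m \<noteq> 1"
  shows "(q::complex)^2 - inverse q^2 \<noteq> 0" "q^2 \<noteq> 1"
proof -
  have "q^4 \<noteq> 1" "q^2 \<noteq> 1" using assms(2) by auto
  then show "q^2 \<noteq> 1" by simp
  show "(q::complex)^2 - inverse q^2 \<noteq> 0"
  proof
    assume "q^2 - inverse q^2 = 0"
    then have "q^2 * q^2 = inverse q^2 * q^2" by simp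
    then have "q^4 = 1" using assms(1) by (simp add: power_inverse field_simps eval_nat_numeral)
    with \<open>q^4 \<noteq> 1\<close> show False by simp
  qed
qed


lemma xval_inv:
  assumes "q \<noteq> 0" "\<forall>m::nat. 0 < m \<longrightarrow> q ^ m \<noteq> 1" "sqrt_choice q s"
  shows "xval q s m * (aval q m + (q - inverse q) * s m) = 1"
proof -
  define P where "P = q^(2*m)"
  have P0: "P \<noteq> 0" using assms(1) by (simp add: P_def)
  have e1: "qint q (m+1) = (P*q^2 - inverse (P*q^2)) / (q^2 - inverse q^2)"
    using qint_P(1) P_def by simp
  have e2: "qint q m = (P - inverse P) / (q^2 - inverse q^2)"
    using qint_P(2) P_def by simp
  have e3: "(s m)^2 = qint q (m+1) * qint q m" using assms(3) sqrt_choice_def by blast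
  have "(aval q m)^2 - (q - inverse q)^2 * (s m)^2 = 1"
    unfolding e3 aval_def e1 e2
    using key_identity[OF assms(1) P0 q4(1)[OF assms(1,2)]]
    by (simp add: mult.assoc diff_divide_distrib)
  then show ?thesis unfolding xval_def aval_def by (simp add: algebra_simps power2_eq_square)
qed

lemma xval_sum:
  assumes "q \<noteq> 0" "\<forall>m::nat. 0 < m \<longrightarrow> q ^ m \<noteq> 1" "sqrt_choice q s" "e = 1 \<or> e = -1"
  shows "xval q s m powi e + inverse (xval q s m powi e) = 2 * aval q m"
proof -
  have h: "xval q s m * (aval q m + (q - inverse q) * s m) = 1" by (rule xval_inv[OF assms(1-3)])
  then have "inverse (xval q s m) = aval q m + (q - inverse q) * s m"
    using inverse_unique by blast
  then have "xval q s m + inverse (xval q s m) = 2 * aval q m"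
    unfolding xval_def aval_def by simp
  then show ?thesis using assms(4) by (auto simp: power_int_minus add.commute)
qed

lemma aval_inj:
  assumes "q \<noteq> 0" "\<forall>m::nat. 0 < m \<longrightarrow> q ^ m \<noteq> 1" "aval q m = aval q m'"
  shows "m = m'"
proof -
  define P where "P = q^(2*m)"
  define P' where "P' = q^(2*m')"
  define r where "r = inverse q"
  define R where "R = inverse P"
  define R' where "R' = inverse P'"
  have qr: "q*r = 1" using assms(1) by (simp add: r_def)
  have PR: "P*R = 1" using assms(1) by (simp add: R_def P_def)
  have PR': "P'*R' = 1" using assms(1) by (simp add: R'_def P'_def)
  have iPq: "inverse (P*q^2) = R*r^2" "inverse (P'*q^2) = R'*r^2" by (simp_all add: R_def R'_def r_def power_inverse)
  have D: "q^2 - inverse q^2 \<noteq> 0" "q^2 \<noteq> 1" using q4[OF assms(1,2)] by auto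
  have a1: "aval q m = (P*q^2 - R*r^2 - (P - R)) / (q^2 - inverse q^2)"
    unfolding aval_P P_def[symmetric] iPq R_def[symmetric] by (rule refl)
  have a2: "aval q m' = (P'*q^2 - R'*r^2 - (P' - R')) / (q^2 - inverse q^2)"
    unfolding aval_P P'_def[symmetric] iPq R'_def[symmetric] by (rule refl)
  have "P*q^2 - R*r^2 - (P - R) = P'*q^2 - R'*r^2 - (P' - R')"
    using assms(3) D(1) unfolding a1 a2 by simp
  then have "(P-P')*(q^2-1)*(P*P'*q^2-1) = 0" using qr PR PR' by algebra
  then have "P = P' \<or> P*P'*q^2 = 1" using D(2) by auto
  then show ?thesis
  proof
    assume "P = P'"
    then show ?thesis using qpow_inj[OF assms(1,2)] unfolding P_def P'_def by fastforce
  next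
    assume "P*P'*q^2 = 1"
    moreover have "q^(2*m+2*m'+2) = P*P'*q^2" unfolding P_def P'_def by (simp only: power_add)
    ultimately have "q^(2*m+2*m'+2) = 1" by simp
    then show ?thesis using assms(2) by (metis add_gr_0 zero_less_numeral)
  qed
qed

lemma xval_powi_inj:
  assumes "q \<noteq> 0" "\<forall>m::nat. 0 < m \<longrightarrow> q ^ m \<noteq> 1" "sqrt_choice q s"
    "e1 = 1 \<or> e1 = -1" "e2 = 1 \<or> e2 = -1"
    "xval q s m powi e1 = xval q s m' powi e2"
  shows "m = m'"
proof -
  have "2 * aval q m = 2 * aval q m'"
    using xval_sum[OF assms(1-4), of m] xval_sum[OF assms(1-3,5), of m'] assms(6) by simp
  then show ?thesis using aval_inj[OF assms(1,2)] by simp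
qed



definition cont :: "nat list \<Rightarrow> (nat \<times> nat \<Rightarrow> nat) \<Rightarrow> nat \<Rightarrow> nat" where
  "cont la T k = (case the_inv_into (shifted_diagram la) T k of (i,j) \<Rightarrow> j - i)"

lemma qk_cont: "qk q s la T k = xval q s (cont la T k)"
  unfolding qk_def cont_def by (simp split: prod.split)

lemma sst_bij: "T \<in> std_shifted_tableaux la \<Longrightarrow> bij_betw T (shifted_diagram la) {1..sum_list la}"
  by (simp add: std_shifted_tableaux_def)

lemma sst_inv:
  assumes "T \<in> std_shifted_tableaux la" "k \<in> {1..sum_list la}"
  shows "the_inv_into (shifted_diagram la) T k \<in> shifted_diagram la"
    "T (the_inv_into (shifted_diagram la) T k) = k"
  using sst_bij[OF assms(1)] assms(2)
  by (auto simp: bij_betw_def intro: the_inv_into_into f_the_inv_into_f)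

lemma sst_inv2:
  assumes "T \<in> std_shifted_tableaux la" "b \<in> shifted_diagram la"
  shows "the_inv_into (shifted_diagram la) T (T b) = b"
  using sst_bij[OF assms(1)] assms(2) by (auto simp: bij_betw_def intro: the_inv_into_f_f)

lemma sp_strict:
  assumes "strict_partition la" "i < i'" "i' < length la"
  shows "la ! i' < la ! i"
  using assms unfolding strict_partition_def by (auto simp: sorted_wrt_iff_nth_less)

lemma diag_in:
  assumes "strict_partition la" "(i, i+d) \<in> shifted_diagram la" "1 \<le> i'" "i' \<le> i"
  shows "(i', i'+d) \<in> shifted_diagram la"
proof -
  have "la ! (i - 1) \<le> la ! (i' - 1)"
  proof (cases "i' = i")
    case False
    then have "i' - 1 < i - 1" "i - 1 < length la" using assms by (auto simp: shifted_diagram_def)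
    then show ?thesis using sp_strict[OF assms(1), of "i' - 1" "i - 1"] by simp
  qed simp
  then show ?thesis using assms by (auto simp: shifted_diagram_def)
qed

lemma diag_step:
  assumes "strict_partition la" "T \<in> std_shifted_tableaux la"
    "(i+1, i+1+d) \<in> shifted_diagram la" "1 \<le> i"
  shows "T (i, i+d) < T (i+1, i+1+d)"
proof -
  have "la ! i < la ! (i - 1)"
    using sp_strict[OF assms(1), of "i - 1" i] assms(3,4) by (auto simp: shifted_diagram_def)
  then have b1: "(i, i+d) \<in> shifted_diagram la" "(i, i+d+1) \<in> shifted_diagram la"
    using assms(3,4) by (auto simp: shifted_diagram_def)
  have "T (i, i+d) < T (i, i+d+1)" using assms(2) b1 by (auto simp: std_shifted_tableaux_def)
  also have "T (i, i+d+1) < T (i+1, i+d+1)" using assms(2,3) b1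
    by (auto simp: std_shifted_tableaux_def)
  finally show ?thesis by simp
qed

lemma diag_mono:
  assumes "strict_partition la" "T \<in> std_shifted_tableaux la"
    "(i, i+d) \<in> shifted_diagram la" "1 \<le> i'" "i' < i"
  shows "T (i', i'+d) < T (i, i+d)"
  using assms(3,5)
proof (induction i)
  case 0 then show ?case by simp
next
  case (Suc i)
  have st: "T (i, i+d) < T (i+1, i+1+d)"
    using diag_step[OF assms(1,2), of i d] Suc.prems assms(4) by simp
  show ?case
  proof (cases "i' = i")
    case True then show ?thesis using st by simp
  next
    case False
    have "(i, i+d) \<in> shifted_diagram la" using diag_in[OF assms(1) Suc.prems(1), of i] assms(4) Suc.prems by simp
    then have "T (i', i'+d) < T (i, i+d)" using Suc.IH False Suc.prems by simp
    then show ?thesis using st by simp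
  qed
qed

lemma diag_le1: "(i,j) \<in> shifted_diagram la \<Longrightarrow> 1 \<le> i \<and> i \<le> j"
  by (simp add: shifted_diagram_def)

lemma row_count:
  assumes "strict_partition la" "T \<in> std_shifted_tableaux la" "(i, j) \<in> shifted_diagram la"
  shows "i - 1 = card {k \<in> {1..<T (i,j)}. cont la T k = j - i}"
proof -
  define d where "d = j - i"
  have j: "j = i + d" using diag_le1[OF assms(3)] d_def by simp
  have bij: "bij_betw T (shifted_diagram la) {1..sum_list la}" by (rule sst_bij[OF assms(2)])
  have inD: "(i', i'+d) \<in> shifted_diagram la" if "i' \<in> {1..<i}" for i'
    using diag_in[OF assms(1), of i d i'] assms(3) j that by simp
  have "{k \<in> {1..<T (i,j)}. cont la T k = d} = (\<lambda>i'. T (i', i'+d)) ` {1..<i}"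
  proof (intro equalityI subsetI)
    fix k assume k: "k \<in> {k \<in> {1..<T (i,j)}. cont la T k = d}"
    have "T (i,j) \<in> {1..sum_list la}" using bij assms(3) by (auto simp: bij_betw_def)
    then have kr: "k \<in> {1..sum_list la}" using k by auto
    obtain i' j' where b: "the_inv_into (shifted_diagram la) T k = (i', j')" by fastforce
    have bD: "(i',j') \<in> shifted_diagram la" and Tb: "T (i',j') = k"
      using sst_inv[OF assms(2) kr] b by auto
    have "j' - i' = d" using k b by (simp add: cont_def)
    then have j': "j' = i' + d" using diag_le1[OF bD] by linarith
    have "i' < i"
    proof (rule ccontr)
      assume "\<not> i' < i"
      then consider "i' = i" | "i < i'" by linarith
      then show False
      proof cases
        case 1 then show False using Tb k j j' by auto
      next
        case 2
        have "T (i, i+d) < T (i', i'+d)"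
          using diag_mono[OF assms(1,2), of i' d i] bD j' 2 diag_le1[OF assms(3)] by simp
        then show False using Tb k j j' by auto
      qed
    qed
    then show "k \<in> (\<lambda>i'. T (i', i'+d)) ` {1..<i}" using diag_le1[OF bD] Tb j' by auto
  next
    fix k assume "k \<in> (\<lambda>i'. T (i', i'+d)) ` {1..<i}"
    then obtain i' where i': "i' \<in> {1..<i}" "k = T (i', i'+d)" by auto
    have D: "(i', i'+d) \<in> shifted_diagram la" using inD[OF i'(1)] .
    have "T (i', i'+d) \<in> {1..sum_list la}" using bij D by (auto simp: bij_betw_def)
    moreover have "T (i', i'+d) < T (i, j)" using diag_mono[OF assms(1,2), of i d i'] assms(3) j i'(1) by simp
    moreover have "cont la T k = d" using sst_inv2[OF assms(2) D] i'(2) by (simp add: cont_def)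
    ultimately show "k \<in> {k \<in> {1..<T (i,j)}. cont la T k = d}" using i'(2) by auto
  qed
  moreover have "inj_on (\<lambda>i'. T (i', i'+d)) {1..<i}"
  proof (rule inj_onI)
    fix a b assume "a \<in> {1..<i}" "b \<in> {1..<i}" "T (a, a+d) = T (b, b+d)"
    then show "a = b" using inD bij unfolding bij_betw_def inj_on_def by blast
  qed
  ultimately show ?thesis using d_def by (simp add: card_image)
qed



lemma sst_zero: "T \<in> std_shifted_tableaux la \<Longrightarrow> b \<notin> shifted_diagram la \<Longrightarrow> T b = 0"
  by (cases b) (simp add: std_shifted_tableaux_def)

lemma same_box:
  assumes "strict_partition la" "strict_partition mu"
    "La \<in> std_shifted_tableaux la" "Ga \<in> std_shifted_tableaux mu"
    "sum_list la = n" "sum_list mu = n"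
    "\<forall>k\<in>{1..n}. cont la La k = cont mu Ga k" "k \<in> {1..n}"
  shows "the_inv_into (shifted_diagram la) La k = the_inv_into (shifted_diagram mu) Ga k"
proof -
  obtain i j where b1: "the_inv_into (shifted_diagram la) La k = (i,j)" by fastforce
  obtain i' j' where b2: "the_inv_into (shifted_diagram mu) Ga k = (i',j')" by fastforce
  have kr1: "k \<in> {1..sum_list la}" and kr2: "k \<in> {1..sum_list mu}" using assms(5,6,8) by auto
  have D1: "(i,j) \<in> shifted_diagram la" "La (i,j) = k" using sst_inv[OF assms(3) kr1] unfolding b1 by auto
  have D2: "(i',j') \<in> shifted_diagram mu" "Ga (i',j') = k" using sst_inv[OF assms(4) kr2] unfolding b2 by auto
  have c: "j - i = j' - i'" using bspec[OF assms(7,8)] unfolding cont_def b1 b2 by simp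
  have "{k' \<in> {1..<k}. cont la La k' = j - i} = {k' \<in> {1..<k}. cont mu Ga k' = j' - i'}"
    using assms(7,8) c by auto
  then have "i - 1 = i' - 1"
    using row_count[OF assms(1,3) D1(1)] row_count[OF assms(2,4) D2(1)] D1(2) D2(2) by simp
  then have "i = i'" "j = j'" using diag_le1[OF D1(1)] diag_le1[OF D2(1)] c by auto
  then show ?thesis using b1 b2 by simp
qed

lemma same_tableau:
  assumes "strict_partition la" "strict_partition mu"
    "La \<in> std_shifted_tableaux la" "Ga \<in> std_shifted_tableaux mu"
    "sum_list la = n" "sum_list mu = n"
    "\<forall>k\<in>{1..n}. cont la La k = cont mu Ga k"
  shows "La = Ga"
proof
  fix b
  have bij1: "bij_betw La (shifted_diagram la) {1..n}" using sst_bij[OF assms(3)] assms(5) by simp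
  have bij2: "bij_betw Ga (shifted_diagram mu) {1..n}" using sst_bij[OF assms(4)] assms(6) by simp
  have sb: "\<And>k. k \<in> {1..n} \<Longrightarrow> the_inv_into (shifted_diagram la) La k = the_inv_into (shifted_diagram mu) Ga k"
    using same_box[OF assms] .
  show "La b = Ga b"
  proof (cases "b \<in> shifted_diagram la")
    case True
    define k where "k = La b"
    have k: "k \<in> {1..n}" using bij1 True k_def by (auto simp: bij_betw_def)
    have "b = the_inv_into (shifted_diagram mu) Ga k"
      using sst_inv2[OF assms(3) True] sb[OF k] k_def by simp
    moreover have kr: "k \<in> {1..sum_list mu}" using k assms(6) by simp
    ultimately have "Ga b = k" using sst_inv(2)[OF assms(4) kr] by simp
    then show ?thesis using k_def by simp
  next
    case False
    show ?thesis
    proof (cases "b \<in> shifted_diagram mu")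
      case True
      define k where "k = Ga b"
      have k: "k \<in> {1..n}" using bij2 True k_def by (auto simp: bij_betw_def)
      have "b = the_inv_into (shifted_diagram la) La k"
        using sst_inv2[OF assms(4) True] sb[OF k] k_def by simp
      moreover have kr: "k \<in> {1..sum_list la}" using k assms(5) by simp
      ultimately have "b \<in> shifted_diagram la" using sst_inv(1)[OF assms(3) kr] by simp
      then show ?thesis using False by simp
    next
      case F2: False
      have "La b = 0" using False assms(3) by (simp add: sst_zero)
      moreover have "Ga b = 0" using F2 assms(4) by (simp add: sst_zero)
      ultimately show ?thesis by simp
    qed
  qed
qed

lemma diagram_eq:
  assumes "strict_partition la" "strict_partition mu" "shifted_diagram la = shifted_diagram mu"
  shows "la = mu"
proof -
  have pos: "\<And>i. i < length la \<Longrightarrow> 0 < la ! i" "\<And>i. i < length mu \<Longrightarrow> 0 < mu ! i"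
    using assms(1,2) by (auto simp: strict_partition_def)
  have len: "length la \<le> length mu" if "strict_partition la" "strict_partition mu"
    "shifted_diagram la = shifted_diagram mu" for la mu
  proof (cases "length la = 0")
    case False
    have "0 < la ! (length la - 1)" using that(1) False by (auto simp: strict_partition_def)
    then have "(length la, length la) \<in> shifted_diagram la" using False by (simp add: shifted_diagram_def Suc_le_eq)
    then have "(length la, length la) \<in> shifted_diagram mu" using that(3) by simp
    then show ?thesis unfolding shifted_diagram_def by simp
  qed simp
  have L: "length la = length mu" using len[OF assms] len[OF assms(2,1) assms(3)[symmetric]] by simp
  have le: "la ! i \<le> mu ! i" if "strict_partition la" "strict_partition mu"
    "shifted_diagram la = shifted_diagram mu" "i < length la" for la mu i
  proof -
    have "0 < la ! i" using that(1,4) by (auto simp: strict_partition_def)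
    then have "(i+1, i + la ! i) \<in> shifted_diagram la" using that(4) by (simp add: shifted_diagram_def)
    then have "(i+1, i + la ! i) \<in> shifted_diagram mu" using that(3) by simp
    then show ?thesis unfolding shifted_diagram_def by simp
  qed
  show ?thesis
  proof (rule nth_equalityI)
    show "length la = length mu" by (rule L)
    fix i assume "i < length la"
    then show "la ! i = mu ! i" using le[OF assms, of i] le[OF assms(2,1) assms(3)[symmetric], of i] L
      by simp
  qed
qed

lemma diag_of_T:
  assumes "T \<in> std_shifted_tableaux la"
  shows "shifted_diagram la = {b. T b \<noteq> 0}"
proof -
  have "bij_betw T (shifted_diagram la) {1..sum_list la}" by (rule sst_bij[OF assms])
  then have "b \<in> shifted_diagram la \<Longrightarrow> T b \<noteq> 0" for b
    using bij_betw_apply[of T "shifted_diagram la" "{1..sum_list la}" b] by fastforce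
  moreover have "b \<notin> shifted_diagram la \<Longrightarrow> T b = 0" for b using assms by (simp add: sst_zero)
  ultimately show ?thesis by (intro set_eqI) (metis mem_Collect_eq)
qed

lemma cont_eq_from_weights:
  assumes "q \<noteq> 0" "\<forall>m::nat. 0 < m \<longrightarrow> q ^ m \<noteq> 1" "sqrt_choice q s"
    "sign_vec n nu1" "sign_vec n nu2"
    "\<forall>k\<in>{1..n}. qk q s la La k powi nu1 k = qk q s mu Ga k powi nu2 k"
  shows "\<forall>k\<in>{1..n}. cont la La k = cont mu Ga k"
proof
  fix k assume k: "k \<in> {1..n}"
  show "cont la La k = cont mu Ga k"
    using xval_powi_inj[OF assms(1-3)] assms(4,5,6) k unfolding sign_vec_def qk_cont by blast
qed

theorem lemma2p34:
  fixes q :: complex and s :: "nat \<Rightarrow> complex" and la mu :: "nat list" and n :: nat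
    and La Ga :: "nat \<times> nat \<Rightarrow> nat" and nu1 nu2 :: "nat \<Rightarrow> int"
  assumes "q \<noteq> 0" and "\<forall>m::nat. 0 < m \<longrightarrow> q ^ m \<noteq> 1"
    and "sqrt_choice q s"
    and "strict_partition la" and "strict_partition mu"
    and "sum_list la = n" and "sum_list mu = n"
    and "La \<in> std_shifted_tableaux la" and "Ga \<in> std_shifted_tableaux mu"
    and "sign_vec n nu1" and "sign_vec n nu2"
    and "\<forall>k\<in>{1..n}. qk q s la La k powi nu1 k = qk q s mu Ga k powi nu2 k"
  shows "La = Ga \<and> (la \<noteq> mu \<longrightarrow> weights q s la \<inter> weights q s mu = {})"
proof
  show "La = Ga"
    using same_tableau[OF assms(4,5,8,9,6,7) cont_eq_from_weights[OF assms(1-3,10-12)]] .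
  show "la \<noteq> mu \<longrightarrow> weights q s la \<inter> weights q s mu = {}"
  proof (intro impI equalityI subsetI)
    fix w assume ne: "la \<noteq> mu" and w: "w \<in> weights q s la \<inter> weights q s mu"
    obtain T nu where T: "T \<in> std_shifted_tableaux la" "sign_vec n nu" "w = weight q s la T nu"
      using w assms(6) unfolding weights_def by auto
    obtain T' nu' where T': "T' \<in> std_shifted_tableaux mu" "sign_vec n nu'" "w = weight q s mu T' nu'"
      using w assms(7) unfolding weights_def by auto
    have eq: "map (\<lambda>k. qk q s la T k powi nu k) [1..<n + 1] = map (\<lambda>k. qk q s mu T' k powi nu' k) [1..<n + 1]"
      using T(3) T'(3) assms(6,7) by (simp add: weight_def)
    have "\<forall>k\<in>{1..n}. qk q s la T k powi nu k = qk q s mu T' k powi nu' k"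
    proof
      fix k assume k: "k \<in> {1..n}"
      have "k \<in> set [1..<n+1]" using k by auto
      moreover have "\<forall>x\<in>set [1..<n+1]. qk q s la T x powi nu x = qk q s mu T' x powi nu' x"
        using eq by (simp only: map_eq_conv)
      ultimately show "qk q s la T k powi nu k = qk q s mu T' k powi nu' k" by blast
    qed
    then have "T = T'"
      using same_tableau[OF assms(4,5) T(1) T'(1) assms(6,7) cont_eq_from_weights[OF assms(1-3) T(2) T'(2)]] by blast
    then have "shifted_diagram la = shifted_diagram mu" using diag_of_T[OF T(1)] diag_of_T[OF T'(1)] by simp
    then have "la = mu" using diagram_eq[OF assms(4,5)] by simp
    then show "w \<in> {}" using ne by simp
  qed simp
qed

end
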